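(* The support of the invariant probability $\mu$ of the kernel $M$ is the whole segment $[0,1/2]$.
   Context: $M$ is the Markov kernel $M(x,\cdot)=\frac16\sum_{i=1}^6\delta_{z_i(x)}$ on $[0,1/2]$, where for $x\in[0,1/2]$: $z_1(x)=\frac{3x}{2+2x}$; $z_2(x)=\frac{3x}{2-x}$ if $x<2/7$ and $\frac{2-4x}{2-x}$ if $x\ge2/7$; $z_3(x)=\frac{1+x}{3-3x}$ if $x<1/5$ and $\frac{2-4x}{3-3x}$ if $x\ge1/5$; $z_4(x)=\frac{1+x}{4-2x}$; $z_5(x)=\frac{1-2x}{4-2x}$; $z_6(x)=\frac{1-2x}{3}$. $M$ has a unique invariant probability measure, denoted $\mu$. *)

theory Defs
  imports "HOL-Probability.Probability"
begin

definition z :: "nat \<Rightarrow> real \<Rightarrow> real" where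
  "z i x =
    (if i = 1 then 3*x / (2 + 2*x)
     else if i = 2 then (if x < 2/7 then 3*x / (2 - x) else (2 - 4*x) / (2 - x))
     else if i = 3 then (if x < 1/5 then (1 + x) / (3 - 3*x) else (2 - 4*x) / (3 - 3*x))
     else if i = 4 then (1 + x) / (4 - 2*x)
     else if i = 5 then (1 - 2*x) / (4 - 2*x)
     else (1 - 2*x) / 3)"

definition M :: "real \<Rightarrow> real set \<Rightarrow> real" where
  "M x A = (1/6) * (\<Sum>i\<in>{1..6}. indicator A (z i x))"

definition M_invariant_prob :: "real measure \<Rightarrow> bool" where
  "M_invariant_prob \<mu> \<longleftrightarrow>
     prob_space \<mu> \<and> sets \<mu> = sets borel \<and> emeasure \<mu> {0..1/2} = 1 \<and>
     (\<forall>A\<in>sets borel. measure \<mu> A = (\<integral>x. M x A \<partial>\<mu>))"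

definition measure_support :: "real measure \<Rightarrow> real set" where
  "measure_support \<mu> = {x. \<forall>U. open U \<and> x \<in> U \<longrightarrow> emeasure \<mu> U > 0}"

end

theory Submission
  imports Defs
begin

lemma z4: "z 4 x = (1+x)/(4-2*x)" by (simp add: z_def)
lemma z5: "z 5 x = (1-2*x)/(4-2*x)" by (simp add: z_def)

lemma z_meas: "z i \<in> borel_measurable borel"
  unfolding z_def by measurable

lemma lip_aux:
  fixes u x :: real
  assumes "0 \<le> u" "u \<le> 1/2" "0 \<le> x" "x \<le> 1/2"
  shows "abs (6 * (u - x) / ((4 - 2*u) * (4 - 2*x))) \<le> 2/3 * abs (u - x)"
proof -
  have "3*3 \<le> ((4 - 2*u) * (4 - 2*x))"
    by (rule mult_mono) (use assms in linarith)+
  hence p: "9 \<le> ((4 - 2*u) * (4 - 2*x))" by simp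
  hence pp: "0 < ((4 - 2*u) * (4 - 2*x))" by linarith
  have "abs (6 * (u - x) / ((4 - 2*u) * (4 - 2*x))) = 6 * abs (u - x) / ((4 - 2*u) * (4 - 2*x))"
  proof -
    have d: "abs ((4 - 2*u) * (4 - 2*x)) = (4 - 2*u) * (4 - 2*x)" using pp by (rule abs_of_pos)
    have n: "abs (6 * (u - x)) = 6 * abs (u - x)" by (simp only: abs_mult)
    show ?thesis by (simp only: abs_divide d n)
  qed
  also have "\<dots> \<le> 6 * abs (u - x) / 9"
    by (rule divide_left_mono) (use p pp in auto)
  finally show ?thesis by simp
qed

lemma lip4:
  fixes u x :: real
  assumes "0 \<le> u" "u \<le> 1/2" "0 \<le> x" "x \<le> 1/2"
  shows "abs (z 4 u - z 4 x) \<le> 2/3 * abs (u - x)"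
proof -
  have nz: "4 - 2*u \<noteq> 0" "4 - 2*x \<noteq> 0" using assms by linarith+
  have "z 4 u - z 4 x = ((1+u)*(4 - 2*x) - (1+x)*(4 - 2*u)) / ((4 - 2*u) * (4 - 2*x))"
    unfolding z4 by (rule diff_frac_eq[OF nz])
  also have "(1+u)*(4 - 2*x) - (1+x)*(4 - 2*u) = 6 * (u - x)" by (simp add: algebra_simps)
  finally show ?thesis using lip_aux[OF assms] by simp
qed

lemma lip5:
  fixes u x :: real
  assumes "0 \<le> u" "u \<le> 1/2" "0 \<le> x" "x \<le> 1/2"
  shows "abs (z 5 u - z 5 x) \<le> 2/3 * abs (u - x)"
proof -
  have nz: "4 - 2*u \<noteq> 0" "4 - 2*x \<noteq> 0" using assms by linarith+
  have "z 5 u - z 5 x = ((1 - 2*u)*(4 - 2*x) - (1 - 2*x)*(4 - 2*u)) / ((4 - 2*u) * (4 - 2*x))"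
    unfolding z5 by (rule diff_frac_eq[OF nz])
  also have "(1 - 2*u)*(4 - 2*x) - (1 - 2*x)*(4 - 2*u) = - (6 * (u - x))" by (simp add: algebra_simps)
  finally have "abs (z 5 u - z 5 x) = abs (6 * (u - x) / ((4 - 2*u) * (4 - 2*x)))"
    by (simp only: minus_divide_left abs_minus_cancel)
  thus ?thesis using lip_aux[OF assms] by simp
qed

lemma inv4:
  fixes y :: real assumes "1/4 \<le> y" "y \<le> 1/2"
  shows "\<exists>x\<in>{0..1/2}. z 4 x = y"
proof
  show "(4*y-1)/(1+2*y) \<in> {0..1/2}" using assms by (auto simp: field_simps)
  show "z 4 ((4*y-1)/(1+2*y)) = y" using assms by (simp add: z4 field_simps)
qed

lemma inv5:
  fixes y :: real assumes "0 \<le> y" "y \<le> 1/4"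
  shows "\<exists>x\<in>{0..1/2}. z 5 x = y"
proof
  show "(1-4*y)/(2-2*y) \<in> {0..1/2}" using assms by (auto simp: field_simps)
  show "z 5 ((1-4*y)/(2-2*y)) = y" using assms by (simp add: z5 field_simps)
qed

lemma cont4: "x \<le> 1/2 \<Longrightarrow> isCont (z 4) (x::real)"
  unfolding z4[abs_def] by (intro continuous_intros) auto
lemma cont5: "x \<le> 1/2 \<Longrightarrow> isCont (z 5) (x::real)"
  unfolding z5[abs_def] by (intro continuous_intros) auto

theorem lemma17:
  assumes "M_invariant_prob \<mu>"
  shows "measure_support \<mu> = {0..1/2}"
proof -
  have P: "prob_space \<mu>" and sb: "sets \<mu> = sets borel" and m1: "emeasure \<mu> {0..1/2} = 1"
    and inv: "\<And>A. A \<in> sets borel \<Longrightarrow> measure \<mu> A = (\<integral>x. M x A \<partial>\<mu>)"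
    using assms[unfolded M_invariant_prob_def] by (blast, blast, blast, blast)
  interpret prob_space \<mu> by (rule P)
  have sp: "space \<mu> = UNIV" using sets_eq_imp_space_eq[OF sb] by simp
  have opsets: "U \<in> sets \<mu>" if "open U" for U :: "real set" using sb that by simp
  define S where "S = measure_support \<mu>"
  have Sdef: "x \<in> S \<longleftrightarrow> (\<forall>U. open U \<and> x \<in> U \<longrightarrow> emeasure \<mu> U > 0)" for x
    by (simp add: S_def measure_support_def)
  have sub: "S \<subseteq> {0..1/2}"
  proof
    fix x assume "x \<in> S"
    show "x \<in> {0..1/2}"
    proof (rule ccontr)
      assume nx: "x \<notin> {0..1/2}"
      have o: "open (- {0..1/2::real})" by (simp add: open_Compl)
      have "prob {0..1/2} = 1" using m1 by (simp add: emeasure_eq_measure)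
      hence "prob (space \<mu> - {0..1/2}) = 0" using prob_compl[of "{0..1/2}"] sb by simp
      hence "emeasure \<mu> (- {0..1/2}) = 0" using sp by (simp add: emeasure_eq_measure Compl_eq_Diff_UNIV)
      with \<open>x \<in> S\<close> nx o show False unfolding Sdef by auto
    qed
  qed
  have ne: "S \<noteq> {}"
  proof
    assume "S = {}"
    have "\<forall>x. \<exists>U. open U \<and> x \<in> U \<and> emeasure \<mu> U = 0"
    proof
      fix x
      have "x \<notin> S" using \<open>S = {}\<close> by simp
      thus "\<exists>U. open U \<and> x \<in> U \<and> emeasure \<mu> U = 0"
        unfolding Sdef using not_gr_zero by blast
    qed
    then obtain Uf where Uf: "\<And>x. open (Uf x) \<and> x \<in> Uf x \<and> emeasure \<mu> (Uf x) = 0" by metis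
    have "compact {0..1/2::real}" by simp
    then obtain C where C: "C \<subseteq> {0..1/2}" "finite C" "{0..1/2} \<subseteq> (\<Union>c\<in>C. Uf c)"
      by (rule compactE_image[where C="{0..1/2}" and f=Uf]) (use Uf in auto)
    have "emeasure \<mu> {0..1/2} \<le> emeasure \<mu> (\<Union>c\<in>C. Uf c)"
      by (rule emeasure_mono[OF C(3)]) (use Uf opsets C(2) in auto)
    also have "\<dots> \<le> (\<Sum>c\<in>C. emeasure \<mu> (Uf c))"
      by (rule emeasure_subadditive_finite[OF C(2)]) (use Uf opsets in auto)
    also have "\<dots> = 0" using Uf by simp
    finally show False using m1 by simp
  qed
  have Mint: "integrable \<mu> (\<lambda>x. M x U)" if "open U" for U
  proof -
    have [measurable]: "U \<in> sets borel" using that by simp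
    note z_meas[measurable]
    have "(\<lambda>x. M x U) \<in> borel_measurable borel"
      unfolding M_def by measurable
    hence mm: "(\<lambda>x. M x U) \<in> borel_measurable \<mu>" by (subst measurable_cong_sets[OF sb refl])
    have bd: "norm (M x U) \<le> 1" for x
    proof -
      have "(\<Sum>i\<in>{1..6::nat}. indicator U (z i x)) \<le> (\<Sum>i\<in>{1..6::nat}. (1::real))"
        by (rule sum_mono) (simp add: indicator_def)
      moreover have "0 \<le> (\<Sum>i\<in>{1..6::nat}. indicator U (z i x) :: real)"
        by (rule sum_nonneg) simp
      ultimately show ?thesis unfolding M_def by simp
    qed
    show ?thesis by (rule integrable_const_bound[where B=1]) (use mm bd in auto)
  qed
  have invar: "z i u \<in> S" if uS: "u \<in> S" and i: "i \<in> {1..6}" and ct: "isCont (z i) u" for i u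
  proof -
    { fix U :: "real set" assume U: "open U" "z i u \<in> U"
      obtain e where e: "e > 0" "ball (z i u) e \<subseteq> U" by (rule openE[OF U])
      have "z i \<midarrow>u\<rightarrow> z i u" using ct by (simp add: isCont_def)
      from LIM_D[OF this e(1)] obtain d where d: "d > 0"
        "\<forall>y. y \<noteq> u \<and> norm (y - u) < d \<longrightarrow> norm (z i y - z i u) < e"
        by blast
      have bU: "z i y \<in> U" if "y \<in> ball u d" for y
      proof (cases "y = u")
        case True thus ?thesis using U by simp
      next
        case False
        have "norm (y - u) < d" using that by (simp add: dist_norm norm_minus_commute)
        hence "norm (z i y - z i u) < e" using d(2) False by blast
        hence "z i y \<in> ball (z i u) e" by (simp add: dist_norm norm_minus_commute)
        thus ?thesis using e by blast
      qed
      have pos: "emeasure \<mu> (ball u d) > 0" using uS d(1) unfolding Sdef by auto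
      have fin: "emeasure \<mu> (ball u d) < \<top>"
        using emeasure_finite[of "ball u d"] top.not_eq_extremum by blast
      from pos have posm: "measure \<mu> (ball u d) > 0" by (simp add: emeasure_eq_measure)
      have "(\<integral>x. (1/6) * indicator (ball u d) x \<partial>\<mu>) \<le> (\<integral>x. M x U \<partial>\<mu>)"
      proof (rule integral_mono)
        show "integrable \<mu> (\<lambda>x. (1/6) * indicator (ball u d) x :: real)"
          using opsets[of "ball u d"] fin by (intro integrable_mult_right integrable_real_indicator) auto
        show "integrable \<mu> (\<lambda>x. M x U)" using Mint U by simp
        fix x
        have "indicator (ball u d) x \<le> (indicator U (z i x) :: real)"
          using bU by (auto simp: indicator_def)
        also have "\<dots> \<le> (\<Sum>j\<in>{1..6::nat}. indicator U (z j x))"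
          by (rule member_le_sum) (use i in auto)
        finally show "(1/6) * indicator (ball u d) x \<le> M x U" unfolding M_def by simp
      qed
      also have "\<dots> = measure \<mu> U" using inv[of U] U by simp
      finally have "(1/6) * measure \<mu> (ball u d) \<le> measure \<mu> U"
        using opsets[of "ball u d"] fin by simp
      hence "measure \<mu> U > 0" using posm by simp
      hence "emeasure \<mu> U > 0" by (simp add: emeasure_eq_measure)
    }
    thus ?thesis by (simp add: Sdef)
  qed
  have approx: "\<forall>y\<in>{0..1/2}. \<exists>u\<in>S. abs (u - y) \<le> (2/3)^n / 2" for n
  proof (induction n)
    case 0
    from ne obtain u where u: "u \<in> S" by auto
    hence "u \<in> {0..1/2}" using sub by auto
    have "abs (u - y) \<le> (2/3)^0/2" if "y \<in> {0..1/2}" for y :: real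
      using \<open>u \<in> {0..1/2}\<close> that by (auto simp: abs_if)
    thus ?case using u by blast
  next
    case (Suc n)
    show ?case
    proof
      fix y :: real assume y: "y \<in> {0..1/2}"
      show "\<exists>u\<in>S. abs (u - y) \<le> (2/3)^Suc n / 2"
      proof (cases "1/4 \<le> y")
        case True
        obtain x where x: "x \<in> {0..1/2}" "z 4 x = y" using inv4[of y] True y by auto
        obtain u where u: "u \<in> S" "abs (u - x) \<le> (2/3)^n / 2" using Suc.IH x(1) by blast
        have uI: "u \<in> {0..1/2}" using sub u by auto
        have zS: "z 4 u \<in> S" by (rule invar) (use u uI cont4 in auto)
        have "abs (z 4 u - y) \<le> 2/3 * abs (u - x)" using lip4[of u x] uI x by auto
        also have "\<dots> \<le> 2/3 * ((2/3)^n / 2)" using u by simp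
        finally show ?thesis using zS by (auto intro!: bexI[of _ "z 4 u"])
      next
        case False
        obtain x where x: "x \<in> {0..1/2}" "z 5 x = y" using inv5[of y] False y by auto
        obtain u where u: "u \<in> S" "abs (u - x) \<le> (2/3)^n / 2" using Suc.IH x(1) by blast
        have uI: "u \<in> {0..1/2}" using sub u by auto
        have zS: "z 5 u \<in> S" by (rule invar) (use u uI cont5 in auto)
        have "abs (z 5 u - y) \<le> 2/3 * abs (u - x)" using lip5[of u x] uI x by auto
        also have "\<dots> \<le> 2/3 * ((2/3)^n / 2)" using u by simp
        finally show ?thesis using zS by (auto intro!: bexI[of _ "z 5 u"])
      qed
    qed
  qed
  show ?thesis
  proof
    show "measure_support \<mu> \<subseteq> {0..1/2}" using sub S_def by simp
    show "{0..1/2} \<subseteq> measure_support \<mu>"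
    proof
      fix y :: real assume y: "y \<in> {0..1/2}"
      have "y \<in> S" unfolding Sdef
      proof (intro allI impI)
        fix U :: "real set" assume U: "open U \<and> y \<in> U"
        hence U1: "open U" and U2: "y \<in> U" by auto
        obtain e where e: "e > 0" "ball y e \<subseteq> U" by (rule openE[OF U1 U2])
        have "\<exists>n. (2/3::real)^n < e" by (rule real_arch_pow_inv) (use e(1) in auto)
        then obtain n where n: "(2/3::real)^n < e" by blast
        have "\<exists>u\<in>S. abs (u - y) \<le> (2/3)^n / 2" using approx[of n] y by (rule bspec)
        then obtain u where u: "u \<in> S" "abs (u - y) \<le> (2/3)^n / 2" by (rule bexE)
        have "(2/3::real)^n / 2 < e" using n zero_le_power[of "2/3::real" n] by linarith
        hence "abs (u - y) < e" using u(2) by linarith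
        hence "u \<in> ball y e" by (simp add: dist_real_def abs_minus_commute)
        hence uU: "u \<in> U" using e(2) by blast
        have "\<forall>V. open V \<and> u \<in> V \<longrightarrow> emeasure \<mu> V > 0" by (rule iffD1[OF Sdef u(1)])
        thus "emeasure \<mu> U > 0" using U1 uU by simp
      qed
      thus "y \<in> measure_support \<mu>" using S_def by simp
    qed
  qed
qed

end
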